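(* Let $G$ be a finite connected graph with a real structure, let $D_1,D_2$ be real divisors on $G$ and let $f:V(G)\to\mathbb Z$ satisfy $\Delta(f)=D_1-D_2$. Then $\overline f=f$, where $\overline f(v)=f(\overline v)$.
   Context: A finite graph $G$ has vertex set $V(G)$, edge set $E(G)$ and incidence function $\psi$ assigning to each edge a set of one or two vertices (loops and multiple edges allowed). A real structure on $G$ is a pair of involutions of $V(G)$ and $E(G)$, written $v\mapsto\overline v$, $e\mapsto\overline e$, with $\psi(\overline e)=\overline{\psi(e)}$. A divisor is a formal $\mathbb Z$-linear combination $D=\sum_v D(v)v$ of vertices; its conjugate is $\overline D(v)=D(\overline v)$, and $D$ is real if $\overline D=D$. For $f:V(G)\to\mathbb Z$, $\Delta(f)(v)=\sum_{e\in E(G),\,\psi(e)=\{v,w\}}(f(w)-f(v))$. *)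

theory Defs
  imports Main
begin

text \<open>A finite graph: vertex set V, edge set E, incidence psi assigning to each edge
  a set of one or two vertices (loops and multiple edges allowed).\<close>
definition graph :: "'v set \<Rightarrow> 'e set \<Rightarrow> ('e \<Rightarrow> 'v set) \<Rightarrow> bool" where
  "graph V E psi \<longleftrightarrow> finite V \<and> finite E \<and>
     (\<forall>e\<in>E. psi e \<subseteq> V \<and> (card (psi e) = 1 \<or> card (psi e) = 2))"

definition adjacent :: "'e set \<Rightarrow> ('e \<Rightarrow> 'v set) \<Rightarrow> 'v \<Rightarrow> 'v \<Rightarrow> bool" where
  "adjacent E psi v w \<longleftrightarrow> (\<exists>e\<in>E. psi e = {v, w})"

definition connected_graph :: "'v set \<Rightarrow> 'e set \<Rightarrow> ('e \<Rightarrow> 'v set) \<Rightarrow> bool" where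
  "connected_graph V E psi \<longleftrightarrow> graph V E psi \<and> V \<noteq> {} \<and>
     (\<forall>v\<in>V. \<forall>w\<in>V. (adjacent E psi)\<^sup>*\<^sup>* v w)"

definition real_structure ::
  "'v set \<Rightarrow> 'e set \<Rightarrow> ('e \<Rightarrow> 'v set) \<Rightarrow> ('v \<Rightarrow> 'v) \<Rightarrow> ('e \<Rightarrow> 'e) \<Rightarrow> bool" where
  "real_structure V E psi cv ce \<longleftrightarrow>
     (\<forall>v\<in>V. cv v \<in> V \<and> cv (cv v) = v) \<and>
     (\<forall>e\<in>E. ce e \<in> E \<and> ce (ce e) = e) \<and>
     (\<forall>e\<in>E. psi (ce e) = cv ` psi e)"

text \<open>Divisors are functions V \<Rightarrow> int (values outside V irrelevant).\<close>
definition real_divisor :: "'v set \<Rightarrow> ('v \<Rightarrow> 'v) \<Rightarrow> ('v \<Rightarrow> int) \<Rightarrow> bool" where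
  "real_divisor V cv D \<longleftrightarrow> (\<forall>v\<in>V. D (cv v) = D v)"

text \<open>Laplacian: sum over edges e with psi e = {v,w} of f w - f v (loops give 0).\<close>
definition laplacian :: "'e set \<Rightarrow> ('e \<Rightarrow> 'v set) \<Rightarrow> ('v \<Rightarrow> int) \<Rightarrow> 'v \<Rightarrow> int" where
  "laplacian E psi f v = (\<Sum>e\<in>{e\<in>E. v \<in> psi e}. f (THE w. psi e = {v, w}) - f v)"

end

theory Submission
  imports Defs
begin

lemma two_elem:
  assumes "card A = 1 \<or> card A = 2" "x \<in> A"
  shows "\<exists>y. A = {x, y}"
  using assms(1)
proof (elim disjE)
  assume "card A = 1" then obtain a where "A = {a}" by (meson card_1_singletonE)
  then show ?thesis using assms(2) by auto
next
  assume "card A = 2" then obtain a b where "A = {a,b}" "a \<noteq> b" by (meson card_2_iff)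
  then show ?thesis using assms(2) by auto
qed

lemma the_other:
  assumes "A = {v, w}"
  shows "(THE w'. A = {v, w'}) = w"
  using assms by (rule_tac the_equality) (auto simp: doubleton_eq_iff)

lemma harmonic_const:
  fixes g :: "'v \<Rightarrow> int"
  assumes cg: "connected_graph V E psi"
    and h: "\<forall>v\<in>V. laplacian E psi g v = 0"
  shows "\<exists>M. \<forall>v\<in>V. g v = M"
proof -
  have fV: "finite V" and fE: "finite E" and ne: "V \<noteq> {}"
    and pe: "\<forall>e\<in>E. psi e \<subseteq> V \<and> (card (psi e) = 1 \<or> card (psi e) = 2)"
    and conn: "\<forall>v\<in>V. \<forall>w\<in>V. (adjacent E psi)\<^sup>*\<^sup>* v w"
    using cg unfolding connected_graph_def graph_def by auto
  define M where "M = Max (g ` V)"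
  have le: "\<And>v. v \<in> V \<Longrightarrow> g v \<le> M" unfolding M_def using fV by (intro Max_ge) auto
  obtain v0 where v0: "v0 \<in> V" "g v0 = M" unfolding M_def using fV ne
    by (metis (no_types, lifting) Max_in empty_is_image finite_imageI imageE)
  have stp: "g y = M" if xV: "x \<in> V" and gx: "g x = M" and adj: "adjacent E psi x y" for x y
  proof -
    obtain e0 where e0: "e0 \<in> E" "psi e0 = {x, y}" using adj unfolding adjacent_def by auto
    let ?S = "{e\<in>E. x \<in> psi e}"
    let ?o = "\<lambda>e. THE w. psi e = {x, w}"
    have oV: "?o e \<in> V" if "e \<in> ?S" for e
    proof -
      have "card (psi e) = 1 \<or> card (psi e) = 2" "x \<in> psi e" using pe that by auto
      then obtain w where w: "psi e = {x, w}" using two_elem by meson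
      then have "?o e = w" by (rule the_other)
      moreover have "w \<in> psi e" using w by simp
      moreover have "psi e \<subseteq> V" using pe that by blast
      ultimately show ?thesis by auto
    qed
    have "laplacian E psi g x = 0" using h xV by blast
    then have "(\<Sum>e\<in>?S. g (?o e) - g x) = 0" unfolding laplacian_def .
    then have "(\<Sum>e\<in>?S. g x - g (?o e)) = 0"
      by (simp add: sum_subtractf)
    moreover have "\<forall>e\<in>?S. 0 \<le> g x - g (?o e)"
    proof
      fix e assume "e \<in> ?S"
      then have "g (?o e) \<le> M" using le oV by blast
      then show "0 \<le> g x - g (?o e)" using gx by simp
    qed
    ultimately have "\<forall>e\<in>?S. g x - g (?o e) = 0" using fE
      by (subst (asm) sum_nonneg_eq_0_iff) auto
    moreover have "e0 \<in> ?S" using e0 by auto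
    moreover have "?o e0 = y" using e0(2) by (rule the_other)
    ultimately show ?thesis using gx by fastforce
  qed
  have "g w = M" if "(adjacent E psi)\<^sup>*\<^sup>* v0 w" for w
    using that
  proof (induction rule: rtranclp_induct)
    case base then show ?case using v0 by simp
  next
    case (step y z)
    have "y \<in> V"
    proof (cases "y = v0")
      case True then show ?thesis using v0 by simp
    next
      case False
      then obtain u where "(adjacent E psi) u y" using step(1)
        by (metis rtranclp.cases)
      then show ?thesis using pe unfolding adjacent_def by auto
    qed
    then show ?case using step.IH step(2) by (rule stp)
  qed
  then show ?thesis using conn v0 by blast
qed

theorem lemma1:
  fixes V :: "'v set" and E :: "'e set" and psi :: "'e \<Rightarrow> 'v set"
    and cv :: "'v \<Rightarrow> 'v" and ce :: "'e \<Rightarrow> 'e"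
    and D1 D2 f :: "'v \<Rightarrow> int"
  assumes "connected_graph V E psi"
    and "real_structure V E psi cv ce"
    and "real_divisor V cv D1" and "real_divisor V cv D2"
    and "\<forall>v\<in>V. laplacian E psi f v = D1 v - D2 v"
  shows "\<forall>v\<in>V. f (cv v) = f v"
proof -
  have pe: "\<forall>e\<in>E. psi e \<subseteq> V \<and> (card (psi e) = 1 \<or> card (psi e) = 2)"
    using assms(1) unfolding connected_graph_def graph_def by auto
  have cvV: "\<forall>v\<in>V. cv v \<in> V \<and> cv (cv v) = v"
    and ceE: "\<forall>e\<in>E. ce e \<in> E \<and> ce (ce e) = e"
    and pce: "\<forall>e\<in>E. psi (ce e) = cv ` psi e"
    using assms(2) unfolding real_structure_def by auto
  have lapc: "laplacian E psi (\<lambda>v. f (cv v)) v = laplacian E psi f (cv v)" if vV: "v \<in> V" for v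
  proof -
    let ?S = "{e\<in>E. v \<in> psi e}"
    have inj: "inj_on ce ?S"
    proof (rule inj_onI)
      fix a b assume ab: "a \<in> ?S" "b \<in> ?S" "ce a = ce b"
      have "a = ce (ce a)" "b = ce (ce b)" using ab(1,2) ceE by auto
      then show "a = b" using ab(3) by simp
    qed
    have img: "ce ` ?S = {e\<in>E. cv v \<in> psi e}"
    proof
      show "ce ` ?S \<subseteq> {e\<in>E. cv v \<in> psi e}" using ceE pce by auto
    next
      show "{e\<in>E. cv v \<in> psi e} \<subseteq> ce ` ?S"
      proof
        fix e assume e: "e \<in> {e\<in>E. cv v \<in> psi e}"
        then have "ce e \<in> E" "psi (ce e) = cv ` psi e" using ceE pce by auto
        moreover have "v \<in> cv ` psi e" using e cvV vV pe by (metis (no_types, lifting) image_eqI mem_Collect_eq)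
        ultimately have "ce e \<in> ?S" by auto
        moreover have "e = ce (ce e)" using e ceE by auto
        ultimately show "e \<in> ce ` ?S" by blast
      qed
    qed
    have oth: "cv (THE w. psi e = {v, w}) = (THE w. psi (ce e) = {cv v, w})" if e: "e \<in> ?S" for e
    proof -
      have "card (psi e) = 1 \<or> card (psi e) = 2" "v \<in> psi e" using pe e by auto
      then obtain w where w: "psi e = {v, w}" using two_elem by meson
      then have "psi (ce e) = {cv v, cv w}" using pce e by auto
      then show ?thesis using w by (simp add: the_other)
    qed
    have "laplacian E psi f (cv v) = (\<Sum>e\<in>ce ` ?S. f (THE w. psi e = {cv v, w}) - f (cv v))"
      unfolding laplacian_def img ..
    also have "\<dots> = (\<Sum>e\<in>?S. f (THE w. psi (ce e) = {cv v, w}) - f (cv v))"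
      using inj by (simp add: sum.reindex)
    also have "\<dots> = laplacian E psi (\<lambda>v. f (cv v)) v"
      unfolding laplacian_def using oth by (intro sum.cong) auto
    finally show ?thesis by simp
  qed
  define g where "g v = f (cv v) - f v" for v
  have "\<forall>v\<in>V. laplacian E psi g v = 0"
  proof
    fix v assume v: "v \<in> V"
    have "laplacian E psi g v = laplacian E psi (\<lambda>v. f (cv v)) v - laplacian E psi f v"
      unfolding laplacian_def g_def sum_subtractf[symmetric] by (rule sum.cong) auto
    also have "\<dots> = 0" using lapc[OF v] assms(3-5) v cvV
      unfolding real_divisor_def by auto
    finally show "laplacian E psi g v = 0" .
  qed
  then obtain M where M: "\<forall>v\<in>V. g v = M" using harmonic_const[OF assms(1)] by blast
  show ?thesis
  proof
    fix v assume v: "v \<in> V"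
    have "g v = M" "g (cv v) = M" using M v cvV by auto
    then show "f (cv v) = f v" unfolding g_def using cvV v by auto
  qed
qed

end
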